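(* Let $X$ be a Hausdorff topological space, $T:X\to X$ continuous, $V\subseteq X$ a nonempty open set and $\delta>0$ such that for every nonempty open set $U\subseteq V$ there is $x_U\in U$ with $\overline{Bd}(N_T(x_U,U))>\delta$. Then there is $j\ge1$ such that $T^j|_V=\mathrm{Id}_V$.
   Context: $N_T(x,U)=\{n\in\mathbb N:T^nx\in U\}$. The upper Banach density of $A\subseteq\mathbb N$ is $\overline{Bd}(A)=\lim_n\sup_k\#(A\cap[k,k+n])/n$. *)

theory Defs
  imports "HOL-Analysis.Analysis"
begin

definition return_times :: "('a \<Rightarrow> 'a) \<Rightarrow> 'a \<Rightarrow> 'a set \<Rightarrow> nat set" where
  "return_times T x U = {n. (T ^^ n) x \<in> U}"

definition upper_banach_density :: "nat set \<Rightarrow> real" where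
  "upper_banach_density A =
     lim (\<lambda>n. SUP k. real (card (A \<inter> {k..k+n})) / real n)"

end

theory Submission imports Defs begin

definition Fd :: "nat set \<Rightarrow> nat \<Rightarrow> real" where
  "Fd A m = (SUP k. real (card (A \<inter> {k..<k+m})))"

lemma card_int_le: "card (A \<inter> {k..<k+m}) \<le> m"
proof -
  have "card (A \<inter> {k..<k+m}) \<le> card {k..<k+m}" by (rule card_mono) auto
  thus ?thesis by simp
qed

lemma Fd_bdd: fixes A :: "nat set" and m :: nat shows "bdd_above (range (\<lambda>k. real (card (A \<inter> {k..<k+m}))))"
  by (rule bdd_aboveI[where M="real m"]) (auto simp: card_int_le)

lemma Fd_upper: "real (card (A \<inter> {k..<k+m})) \<le> Fd A m"
  unfolding Fd_def by (rule cSUP_upper[OF _ Fd_bdd]) simp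

lemma Fd_le: "Fd A m \<le> real m"
  unfolding Fd_def by (rule cSUP_least) (auto simp: card_int_le)

lemma Fd_nonneg: "0 \<le> Fd A m"
  using Fd_upper[of A 0 m] by linarith

lemma Fd_sub: "Fd A (m+p) \<le> Fd A m + Fd A p"
proof -
  have "real (card (A \<inter> {k..<k+(m+p)})) \<le> Fd A m + Fd A p" for k
  proof -
    have "A \<inter> {k..<k+(m+p)} = (A \<inter> {k..<k+m}) \<union> (A \<inter> {k+m..<(k+m)+p})" by auto
    hence "card (A \<inter> {k..<k+(m+p)}) = card (A \<inter> {k..<k+m}) + card (A \<inter> {k+m..<(k+m)+p})"
      by (simp add: card_Un_disjoint disjoint_iff)
    thus ?thesis using Fd_upper[of A k m] Fd_upper[of A "k+m" p] by simp
  qed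
  thus ?thesis unfolding Fd_def[of A "m+p"] by (intro cSUP_least) auto
qed

lemma Fd_qp: "Fd A (q*p + r) \<le> real q * Fd A p + real r"
proof (induction q)
  case 0 thus ?case using Fd_le[of A r] by simp
next
  case (Suc q)
  have "Fd A (Suc q * p + r) = Fd A (p + (q*p+r))" by (simp add: algebra_simps)
  also have "\<dots> \<le> Fd A p + Fd A (q*p+r)" by (rule Fd_sub)
  also have "\<dots> \<le> real (Suc q) * Fd A p + real r" using Suc by (simp add: algebra_simps)
  finally show ?case .
qed

definition Ld :: "nat set \<Rightarrow> real" where
  "Ld A = Inf ((\<lambda>p. Fd A p / real p) ` {1..})"

lemma Ld_bdd: "bdd_below ((\<lambda>p. Fd A p / real p) ` {1..})"
  by (rule bdd_belowI[where m=0]) (auto simp: Fd_nonneg)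

lemma Ld_le: "p \<ge> 1 \<Longrightarrow> Ld A \<le> Fd A p / real p"
  unfolding Ld_def by (rule cInf_lower[OF _ Ld_bdd]) auto

lemma Fd_lim: "(\<lambda>m. Fd A m / real m) \<longlonglongrightarrow> Ld A"
proof (rule LIMSEQ_I)
  fix r :: real assume r: "0 < r"
  have "Inf ((\<lambda>p. Fd A p / real p) ` {1..}) < Ld A + r/2" using r by (simp add: Ld_def)
  then obtain p where p: "p \<ge> 1" "Fd A p / real p < Ld A + r/2"
    using cInf_lessD[of "(\<lambda>p. Fd A p / real p) ` {1..}"] by force
  define N where "N = nat (ceiling (2 * real p / r)) + 1"
  show "\<exists>no. \<forall>n\<ge>no. norm (Fd A n / real n - Ld A) < r"
  proof (intro exI allI impI)
    fix m assume mN: "N \<le> m"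
    have m1: "m \<ge> 1" using mN by (simp add: N_def)
    have "real N > 2 * real p / r" unfolding N_def by linarith
    hence "real m > 2 * real p / r" using mN by linarith
    hence pm: "real p / real m < r/2" using r m1 by (simp add: field_simps)
    have low: "Ld A \<le> Fd A m / real m" using Ld_le m1 by simp
    have m_eq: "m = (m div p) * p + m mod p" by simp
    have "Fd A m \<le> real (m div p) * Fd A p + real (m mod p)"
      using Fd_qp[of A "m div p" p "m mod p"] m_eq by simp
    moreover have "real (m div p) * real p \<le> real m"
      by (metis div_mult_mod_eq le_add1 of_nat_le_iff of_nat_mult)
    hence "real (m div p) \<le> real m / real p" using p by (simp add: field_simps)
    hence "real (m div p) * Fd A p \<le> (real m / real p) * Fd A p"
      by (rule mult_right_mono) (rule Fd_nonneg)
    moreover have "real (m mod p) \<le> real p" using p by simp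
    ultimately have "Fd A m \<le> real m * (Fd A p / real p) + real p" by simp
    hence "Fd A m / real m \<le> Fd A p / real p + real p / real m"
      using m1 by (simp add: field_simps)
    hence "Fd A m / real m - Ld A < r" using low pm p(2) by linarith
    thus "norm (Fd A m / real m - Ld A) < r" using low by simp
  qed
qed

lemma ubd_eq: "upper_banach_density A = Ld A"
proof -
  have eq: "(SUP k. real (card (A \<inter> {k..k+n})) / real n) = Fd A (Suc n) / real n" for n
  proof (cases "n = 0")
    case True thus ?thesis by simp
  next
    case False
    have iv: "{k..k+n} = {k..<k+Suc n}" for k by auto
    show ?thesis
    proof (rule antisym)
      show "(SUP k. real (card (A \<inter> {k..k+n})) / real n) \<le> Fd A (Suc n) / real n"
      proof (rule cSUP_least)
        fix k show "real (card (A \<inter> {k..k+n})) / real n \<le> Fd A (Suc n) / real n"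
          unfolding iv by (intro divide_right_mono Fd_upper) simp
      qed simp
      have "Fd A (Suc n) \<le> real n * (SUP k. real (card (A \<inter> {k..k+n})) / real n)"
        unfolding Fd_def
      proof (rule cSUP_least)
        fix k
        have ci: "\<And>k. card (A \<inter> {k..<Suc (k + n)}) \<le> Suc n" using card_int_le[of A _ "Suc n"] by simp
        have bdd: "bdd_above (range (\<lambda>k. real (card (A \<inter> {k..k+n})) / real n))"
          by (rule bdd_aboveI[where M="real (Suc n) / real n"])
             (auto intro!: divide_right_mono simp: iv ci simp del: of_nat_Suc)
        have "real (card (A \<inter> {k..k+n})) / real n \<le> (SUP k. real (card (A \<inter> {k..k+n})) / real n)"
          by (rule cSUP_upper[OF _ bdd]) simp
        thus "real (card (A \<inter> {k..<k + Suc n})) \<le> real n * (SUP k. real (card (A \<inter> {k..k+n})) / real n)"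
          using False by (simp add: atLeastLessThanSuc_atLeastAtMost field_simps)
      qed simp
      thus "Fd A (Suc n) / real n \<le> (SUP k. real (card (A \<inter> {k..k+n})) / real n)"
        using False by (simp add: field_simps)
    qed
  qed
  have t1: "(\<lambda>n. Fd A (Suc n) / real (Suc n)) \<longlonglongrightarrow> Ld A"
    using Fd_lim[of A] by (rule LIMSEQ_Suc)
  have "(\<lambda>n. Fd A (Suc n) / real (Suc n) * (real (Suc n) / real n)) \<longlonglongrightarrow> Ld A * 1"
    by (intro tendsto_mult t1 LIMSEQ_Suc_n_over_n)
  hence t2: "(\<lambda>n. Fd A (Suc n) / real (Suc n) * (real (Suc n) / real n)) \<longlonglongrightarrow> Ld A" by simp
  have "(\<lambda>n. Fd A (Suc n) / real n) \<longlonglongrightarrow> Ld A"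
  proof (rule Lim_transform_eventually[OF t2])
    show "\<forall>\<^sub>F n in sequentially. Fd A (Suc n) / real (Suc n) * (real (Suc n) / real n) = Fd A (Suc n) / real n"
      by (rule eventually_sequentiallyI[of 1]) (simp del: of_nat_Suc)
  qed
  thus ?thesis unfolding upper_banach_density_def eq by (rule limI)
qed

lemma gap_density:
  assumes "\<And>a b. a \<in> A \<Longrightarrow> b \<in> A \<Longrightarrow> a < b \<Longrightarrow> b - a > K"
  shows "upper_banach_density A \<le> 1 / real (Suc K)"
proof -
  have "card (A \<inter> {k..<k+Suc K}) \<le> Suc 0" for k
  proof (subst card_le_Suc0_iff_eq, simp, intro ballI)
    fix a b assume "a \<in> A \<inter> {k..<k+Suc K}" "b \<in> A \<inter> {k..<k+Suc K}"
    thus "a = b" using assms[of a b] assms[of b a] by (cases a b rule: linorder_cases) auto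
  qed
  hence "Fd A (Suc K) \<le> 1" unfolding Fd_def by (intro cSUP_least) auto
  hence "Fd A (Suc K) / real (Suc K) \<le> 1 / real (Suc K)" by (intro divide_right_mono) auto
  thus ?thesis using Ld_le[of "Suc K" A] ubd_eq[of A] by simp
qed

lemma cont_funpow: fixes T :: "'a::topological_space \<Rightarrow> 'a"
  shows "continuous_on UNIV T \<Longrightarrow> continuous_on UNIV (T ^^ n)"
proof (induction n)
  case 0 show ?case by simp
next
  case (Suc n)
  have "continuous_on UNIV (T \<circ> T^^n)"
    by (rule continuous_on_compose[OF Suc.IH[OF Suc.prems]]) (rule continuous_on_subset[OF Suc.prems], simp)
  thus ?case by simp
qed

lemma funpow_fix: "(g::'a\<Rightarrow>'a) x = x \<Longrightarrow> (g ^^ q) x = x"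
  by (induction q) auto

lemma local_period:
  fixes T :: "'a::t2_space \<Rightarrow> 'a" and V :: "'a set" and K :: nat
  assumes cT: "continuous_on UNIV T"
    and hyp: "\<And>U. open U \<Longrightarrow> U \<noteq> {} \<Longrightarrow> U \<subseteq> V \<Longrightarrow>
           \<exists>x\<in>U. upper_banach_density (return_times T x U) > 1 / real (Suc K)"
    and U: "open U" "U \<noteq> {}" "U \<subseteq> V"
  shows "\<exists>j\<in>{1..K}. \<exists>U'. open U' \<and> U' \<noteq> {} \<and> U' \<subseteq> U \<and> (\<forall>x\<in>U'. (T ^^ j) x = x)"
proof (rule ccontr)
  assume "\<not> ?thesis"
  hence nf: "\<And>j U'. j \<in> {1..K} \<Longrightarrow> open U' \<Longrightarrow> U' \<noteq> {} \<Longrightarrow> U' \<subseteq> U \<Longrightarrow> \<exists>x\<in>U'. (T ^^ j) x \<noteq> x"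
    by blast
  have "i \<le> K \<Longrightarrow> \<exists>W. open W \<and> W \<noteq> {} \<and> W \<subseteq> U \<and> (\<forall>j\<in>{1..i}. \<forall>x\<in>W. (T ^^ j) x \<notin> W)" for i
  proof (induction i)
    case 0 thus ?case using U by auto
  next
    case (Suc i)
    then obtain W where W: "open W" "W \<noteq> {}" "W \<subseteq> U" "\<forall>j\<in>{1..i}. \<forall>x\<in>W. (T ^^ j) x \<notin> W"
      by auto
    obtain x where x: "x \<in> W" "(T ^^ Suc i) x \<noteq> x" using nf[of "Suc i" W] W Suc.prems by auto
    obtain A B where AB: "open A" "open B" "x \<in> A" "(T ^^ Suc i) x \<in> B" "A \<inter> B = {}"
      using hausdorff[OF x(2)[symmetric]] by blast
    define W' where "W' = W \<inter> A \<inter> (T ^^ Suc i) -` B"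
    have "open ((T ^^ Suc i) -` B \<inter> UNIV)"
      using continuous_on_open_vimage[of UNIV "T ^^ Suc i"] cont_funpow[OF cT, of "Suc i"] AB(2) by simp
    hence "open W'" unfolding W'_def using W(1) AB(1) by (simp add: open_Int Int_assoc)
    moreover have "x \<in> W'" using x AB unfolding W'_def by auto
    moreover have "W' \<subseteq> U" using W unfolding W'_def by auto
    moreover have "\<forall>j\<in>{1..Suc i}. \<forall>y\<in>W'. (T ^^ j) y \<notin> W'"
    proof (intro ballI)
      fix j y assume j: "j \<in> {1..Suc i}" and y: "y \<in> W'"
      show "(T ^^ j) y \<notin> W'"
      proof (cases "j = Suc i")
        case True thus ?thesis using y AB(5) unfolding W'_def by auto
      next
        case False hence "j \<in> {1..i}" using j by auto
        thus ?thesis using W(4) y unfolding W'_def by auto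
      qed
    qed
    ultimately show ?case by blast
  qed
  then obtain W where W: "open W" "W \<noteq> {}" "W \<subseteq> U" "\<forall>j\<in>{1..K}. \<forall>x\<in>W. (T ^^ j) x \<notin> W"
    by blast
  obtain x where x: "x \<in> W" "upper_banach_density (return_times T x W) > 1 / real (Suc K)"
    using hyp[OF W(1,2)] W(3) U(3) by blast
  have "upper_banach_density (return_times T x W) \<le> 1 / real (Suc K)"
  proof (rule gap_density)
    fix a b assume a: "a \<in> return_times T x W" and b: "b \<in> return_times T x W" and ab: "a < b"
    have "(T ^^ (b - a)) ((T ^^ a) x) = (T ^^ b) x"
    proof -
      have "b = (b - a) + a" using ab by simp
      hence "(T ^^ b) x = (T ^^ ((b - a) + a)) x" by simp
      thus ?thesis by (simp only: funpow_add o_def)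
    qed
    hence "(T ^^ (b - a)) ((T ^^ a) x) \<in> W" using b by (simp add: return_times_def)
    moreover have "(T ^^ a) x \<in> W" using a by (simp add: return_times_def)
    ultimately have "b - a \<notin> {1..K}" using W(4) by blast
    thus "b - a > K" using ab by auto
  qed
  thus False using x(2) by simp
qed

theorem mainTheorem13:
  fixes T :: "'a::t2_space \<Rightarrow> 'a" and V :: "'a set" and \<delta> :: real
  assumes "continuous_on UNIV T"
    and "open V" and "V \<noteq> {}"
    and "\<delta> > 0"
    and "\<And>U. open U \<Longrightarrow> U \<noteq> {} \<Longrightarrow> U \<subseteq> V \<Longrightarrow>
           \<exists>x\<in>U. upper_banach_density (return_times T x U) > \<delta>"
  shows "\<exists>j\<ge>1. \<forall>x\<in>V. (T ^^ j) x = x"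
proof -
  define K where "K = nat (ceiling (1 / \<delta>))"
  have "real (Suc K) \<ge> 1 / \<delta>" unfolding K_def by linarith
  hence "1 \<le> real (Suc K) * \<delta>" using assms(4) by (simp add: divide_le_eq)
  hence Kd: "1 / real (Suc K) \<le> \<delta>" by (simp add: divide_le_eq mult.commute del: of_nat_Suc)
  have hyp: "\<And>U. open U \<Longrightarrow> U \<noteq> {} \<Longrightarrow> U \<subseteq> V \<Longrightarrow>
           \<exists>x\<in>U. upper_banach_density (return_times T x U) > 1 / real (Suc K)"
  proof -
    fix U assume "open U" "U \<noteq> {}" "U \<subseteq> V"
    then obtain x where "x \<in> U" "upper_banach_density (return_times T x U) > \<delta>"
      using assms(5) by blast
    moreover have "upper_banach_density (return_times T x U) > 1 / real (Suc K)"
      using Kd calculation(2) by linarith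
    ultimately show "\<exists>x\<in>U. upper_banach_density (return_times T x U) > 1 / real (Suc K)"
      by blast
  qed
  define M where "M = (fact K :: nat)"
  have M1: "M \<ge> 1" unfolding M_def by (simp add: Suc_leI)
  have "\<forall>x\<in>V. (T ^^ M) x = x"
  proof (rule ccontr)
    assume "\<not> ?thesis"
    then obtain x where x: "x \<in> V" "(T ^^ M) x \<noteq> x" by blast
    define E where "E = {y. (T ^^ M) y = y}"
    have "closed E" unfolding E_def
      using closed_Collect_eq[of "T ^^ M" "\<lambda>x. x"] cont_funpow[OF assms(1), of M] continuous_on_id[of UNIV] by blast
    define U where "U = V - E"
    have "open U" unfolding U_def using \<open>closed E\<close> assms(2) by (simp add: open_Diff)
    moreover have "U \<noteq> {}" using x unfolding U_def E_def by auto
    moreover have "U \<subseteq> V" unfolding U_def by auto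
    ultimately have "\<exists>j\<in>{1..K}. \<exists>U'. open U' \<and> U' \<noteq> {} \<and> U' \<subseteq> U \<and> (\<forall>x\<in>U'. (T ^^ j) x = x)"
      using local_period[where T=T and V=V and K=K and U=U, OF assms(1) hyp] by simp
    then obtain j U' where j: "j \<in> {1..K}" and U': "open U'" "U' \<noteq> {}" "U' \<subseteq> U"
      "\<forall>x\<in>U'. (T ^^ j) x = x" by blast
    have "j dvd M" unfolding M_def using j by (simp add: dvd_fact)
    then obtain q where q: "M = j * q" by blast
    obtain y where y: "y \<in> U'" using U'(2) by blast
    have "((T ^^ j) ^^ q) y = y" by (rule funpow_fix) (use U'(4) y in blast)
    hence "(T ^^ M) y = y" unfolding q funpow_mult by simp
    hence "y \<in> E" unfolding E_def by simp
    thus False using y U'(3) unfolding U_def by auto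
  qed
  thus ?thesis using M1 by blast
qed

end
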